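(* Let $n=3$ and let $d=(d_1,d_2,d_3)$ satisfy $d_1\ge d_2\ge d_3\ge 0$ and $d_1+d_2+d_3=1$. Then $\min_\chi\|d-\mathcal{SS}(\chi)\|_1\le\tfrac13$, the minimum ranging over all weighted voting games $\chi$ on $N=\{1,2,3\}$, and equality holds if and only if $d$ lies in one of the following sets: (i) $d_1=\tfrac56$, $\tfrac1{12}\le d_2\le\tfrac16$; (ii) $\tfrac23\le d_1\le\tfrac56$, $d_1+d_2=1$ (i.e. $d_3=0$); (iii) $\tfrac12\le d_1\le\tfrac23$, $d_2=\tfrac13$; (iv) $d_1=\tfrac12$, $\tfrac14\le d_2\le\tfrac13$; (v) $\tfrac5{12}\le d_1\le\tfrac12$, $d_1+d_2=\tfrac56$ (i.e. $d_3=\tfrac16$).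
   Context: A simple game on $N=\{1,\dots,n\}$ is a monotone Boolean function $\chi:2^N\to\{0,1\}$ with $\chi(\emptyset)=0$, $\chi(N)=1$; it is a weighted voting game if there are weights $w_i\ge0$ and a quota $q$ with $\chi(U)=1\iff\sum_{i\in U}w_i\ge q$. An $i$-swing is a set $U\subseteq N\setminus\{i\}$ with $\chi(U)=0$, $\chi(U\cup\{i\})=1$. Shapley–Shubik index: $\mathcal{SS}(\chi,i)=\frac1{n!}\sum_{U\text{ an }i\text{-swing}}|U|!(n-|U|-1)!$, and $\mathcal{SS}(\chi)=(\mathcal{SS}(\chi,1),\dots,\mathcal{SS}(\chi,n))$. For $n=3$, up to permutation of voters, the achievable Shapley–Shubik vectors are $(1,0,0)$, $(\tfrac23,\tfrac16,\tfrac16)$, $(\tfrac12,\tfrac12,0)$, $(\tfrac13,\tfrac13,\tfrac13)$. *)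

theory Defs
  imports Complex_Main
begin

text \<open>Voters are N = {1..n}. A game is a predicate on coalitions (subsets of N);
  its values outside subsets of N are irrelevant.\<close>

definition simple_game :: "nat \<Rightarrow> (nat set \<Rightarrow> bool) \<Rightarrow> bool" where
  "simple_game n \<chi> \<longleftrightarrow>
     (\<forall>U V. U \<subseteq> V \<and> V \<subseteq> {1..n} \<and> \<chi> U \<longrightarrow> \<chi> V) \<and>
     \<not> \<chi> {} \<and> \<chi> {1..n}"

definition weighted_voting_game :: "nat \<Rightarrow> (nat set \<Rightarrow> bool) \<Rightarrow> bool" where
  "weighted_voting_game n \<chi> \<longleftrightarrow> simple_game n \<chi> \<and>
     (\<exists>(w :: nat \<Rightarrow> real) (q :: real). (\<forall>i\<in>{1..n}. w i \<ge> 0) \<and>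
        (\<forall>U. U \<subseteq> {1..n} \<longrightarrow> (\<chi> U \<longleftrightarrow> (\<Sum>i\<in>U. w i) \<ge> q)))"

definition is_swing :: "nat \<Rightarrow> (nat set \<Rightarrow> bool) \<Rightarrow> nat \<Rightarrow> nat set \<Rightarrow> bool" where
  "is_swing n \<chi> i U \<longleftrightarrow> U \<subseteq> {1..n} - {i} \<and> \<not> \<chi> U \<and> \<chi> (insert i U)"

definition shapley_shubik :: "nat \<Rightarrow> (nat set \<Rightarrow> bool) \<Rightarrow> nat \<Rightarrow> real" where
  "shapley_shubik n \<chi> i =
     (1 / fact n) * (\<Sum>U \<in> {U. is_swing n \<chi> i U}.
        fact (card U) * fact (n - card U - 1))"

definition l1_dist :: "nat \<Rightarrow> (nat \<Rightarrow> real) \<Rightarrow> (nat \<Rightarrow> real) \<Rightarrow> real" where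
  "l1_dist n x y = (\<Sum>i\<in>{1..n}. \<bar>x i - y i\<bar>)"

definition min_dist_wvg :: "nat \<Rightarrow> (nat \<Rightarrow> real) \<Rightarrow> real" where
  "min_dist_wvg n d =
     Min {l1_dist n d (shapley_shubik n \<chi>) | \<chi>. weighted_voting_game n \<chi>}"

end

theory Submission imports Defs begin
lemma wvg_intro:
  fixes w :: "nat \<Rightarrow> real"
  assumes "simple_game n \<chi>" "\<forall>i\<in>{1..n}. w i \<ge> 0" "\<forall>U. U \<subseteq> {1..n} \<longrightarrow> (\<chi> U \<longleftrightarrow> (\<Sum>i\<in>U. w i) \<ge> q)"
  shows "weighted_voting_game n \<chi>"
  unfolding weighted_voting_game_def using assms by blast
lemma wvg_from_w:
  fixes w :: "nat \<Rightarrow> real"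
  assumes "\<forall>i\<in>{1..3}. w i \<ge> 0" "\<not> (0 \<ge> q)" "(\<Sum>i\<in>{1,2,3}. w i) \<ge> q"
  shows "weighted_voting_game 3 (\<lambda>U. (\<Sum>i\<in>U. w i) \<ge> q)"
proof (rule wvg_intro[where w=w and q=q])
  have N: "{1..3::nat} = {1,2,3}" by auto
  have mono: "q \<le> sum w V" if h: "U \<subseteq> V" "V \<subseteq> {1..3}" "q \<le> sum w U" for U V
  proof -
    have "finite V" using h(2) finite_subset by blast
    moreover have "\<forall>i\<in>V - U. 0 \<le> w i" using assms(1) h(2) by blast
    ultimately have "sum w U \<le> sum w V" using h(1) by (intro sum_mono2) auto
    then show ?thesis using h(3) by linarith
  qed
  show "simple_game 3 (\<lambda>U. (\<Sum>i\<in>U. w i) \<ge> q)"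
  proof -
    have "\<forall>U V. U \<subseteq> V \<and> V \<subseteq> {1..3} \<and> q \<le> sum w U \<longrightarrow> q \<le> sum w V" using mono by blast
    then show ?thesis unfolding simple_game_def using assms(2,3) N by simp
  qed
  show "\<forall>i\<in>{1..3}. 0 \<le> w i" by (rule assms(1))
  show "\<forall>U. U \<subseteq> {1..3} \<longrightarrow> ((\<Sum>i\<in>U. w i) \<ge> q \<longleftrightarrow> (\<Sum>i\<in>U. w i) \<ge> q)" by simp
qed



lemma swing_eq: "{U. is_swing 3 \<chi> i U} = {U \<in> Pow ({1..3} - {i}). \<not> \<chi> U \<and> \<chi> (insert i U)}"
  unfolding is_swing_def by auto

lemma ss_sum: "shapley_shubik 3 \<chi> i = (1/6) * (\<Sum>U\<in>Pow({1..3}-{i}). if \<not>\<chi> U \<and> \<chi> (insert i U) then fact (card U) * fact (3 - card U - 1) else 0)"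
proof -
  have fin: "finite (Pow ({1..3::nat} - {i}))" by simp
  show ?thesis unfolding shapley_shubik_def swing_eq sum.inter_filter[OF fin]
    by (simp add: fact_numeral)
qed

lemma ss1: "shapley_shubik 3 \<chi> 1 = (1/6) * ((if \<not>\<chi> {} \<and> \<chi> {1} then 2 else 0) + (if \<not>\<chi> {2} \<and> \<chi> {1,2} then 1 else 0)
   + (if \<not>\<chi> {3} \<and> \<chi> {1,3} then 1 else 0) + (if \<not>\<chi> {2,3} \<and> \<chi> {1,2,3} then 2 else 0))"
proof -
  have e: "{1..3::nat} - {1} = {2,3}" by auto
  show ?thesis unfolding ss_sum e
    by (simp add: sum.inter_filter Pow_insert fact_numeral)
qed
lemma ss2: "shapley_shubik 3 \<chi> 2 = (1/6) * ((if \<not>\<chi> {} \<and> \<chi> {2} then 2 else 0) + (if \<not>\<chi> {1} \<and> \<chi> {1,2} then 1 else 0)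
   + (if \<not>\<chi> {3} \<and> \<chi> {2,3} then 1 else 0) + (if \<not>\<chi> {1,3} \<and> \<chi> {1,2,3} then 2 else 0))"
proof -
  have e: "{1..3::nat} - {2} = {1,3}" by auto
  have f: "{2,Suc 0} = {Suc 0,2}" "{2,Suc 0,3} = {Suc 0,2,3}" by auto
  show ?thesis unfolding ss_sum e
    by (simp add: Pow_insert fact_numeral f)
qed
lemma ss3: "shapley_shubik 3 \<chi> 3 = (1/6) * ((if \<not>\<chi> {} \<and> \<chi> {3} then 2 else 0) + (if \<not>\<chi> {1} \<and> \<chi> {1,3} then 1 else 0)
   + (if \<not>\<chi> {2} \<and> \<chi> {2,3} then 1 else 0) + (if \<not>\<chi> {1,2} \<and> \<chi> {1,2,3} then 2 else 0))"
proof -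
  have e: "{1..3::nat} - {3} = {1,2}" by auto
  have f: "{3,Suc 0} = {Suc 0,3}" "{3,2::nat} = {2,3}" "{3,Suc 0,2} = {Suc 0,2,3}" by auto
  show ?thesis unfolding ss_sum e
    by (simp add: Pow_insert fact_numeral f)
qed
definition gA :: "nat set \<Rightarrow> bool" where "gA U = ((\<Sum>i\<in>U. (if i = 1 then 1 else 0::real)) \<ge> 1)"
definition gB :: "nat set \<Rightarrow> bool" where "gB U = ((\<Sum>i\<in>U. (if i = 1 then 2 else 1::real)) \<ge> 3)"
definition gC :: "nat set \<Rightarrow> bool" where "gC U = ((\<Sum>i\<in>U. (if i = 3 then 0 else 1::real)) \<ge> 2)"
definition gD :: "nat set \<Rightarrow> bool" where "gD U = ((\<Sum>i\<in>U. (1::real)) \<ge> 3)"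

lemma wvgA: "weighted_voting_game 3 gA" unfolding gA_def by (rule wvg_from_w) auto
lemma wvgB: "weighted_voting_game 3 gB" unfolding gB_def by (rule wvg_from_w) auto
lemma wvgC: "weighted_voting_game 3 gC" unfolding gC_def by (rule wvg_from_w) auto
lemma wvgD: "weighted_voting_game 3 gD" unfolding gD_def by (rule wvg_from_w) auto

lemma ssA: "shapley_shubik 3 gA 1 = 1" "shapley_shubik 3 gA 2 = 0" "shapley_shubik 3 gA 3 = 0"
  unfolding ss1 ss2 ss3 gA_def by simp_all
lemma ssB: "shapley_shubik 3 gB 1 = 2/3" "shapley_shubik 3 gB 2 = 1/6" "shapley_shubik 3 gB 3 = 1/6"
  unfolding ss1 ss2 ss3 gB_def by simp_all
lemma ssC: "shapley_shubik 3 gC 1 = 1/2" "shapley_shubik 3 gC 2 = 1/2" "shapley_shubik 3 gC 3 = 0"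
  unfolding ss1 ss2 ss3 gC_def by simp_all
lemma ssD: "shapley_shubik 3 gD 1 = 1/3" "shapley_shubik 3 gD 2 = 1/3" "shapley_shubik 3 gD 3 = 1/3"
  unfolding ss1 ss2 ss3 gD_def by simp_all
definition Tset :: "(real \<times> real \<times> real) set" where
 "Tset = {(1,0,0),(0,1,0),(0,0,1),(2/3,1/6,1/6),(1/6,2/3,1/6),(1/6,1/6,2/3),
          (1/2,1/2,0),(1/2,0,1/2),(0,1/2,1/2),(1/3,1/3,1/3)}"

lemma ss_in_T:
  assumes "simple_game 3 \<chi>"
  shows "(shapley_shubik 3 \<chi> 1, shapley_shubik 3 \<chi> 2, shapley_shubik 3 \<chi> 3) \<in> Tset"
proof -
  have N: "{1..3::nat} = {1,2,3}" by auto
  have m: "\<And>U V. U \<subseteq> V \<Longrightarrow> V \<subseteq> {1,2,3} \<Longrightarrow> \<chi> U \<Longrightarrow> \<chi> V" and e: "\<not> \<chi> {}" and f: "\<chi> {1,2,3}"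
    using assms unfolding simple_game_def N by blast+
  have "\<chi> {1} \<Longrightarrow> \<chi> {1,2}" "\<chi> {1} \<Longrightarrow> \<chi> {1,3}" "\<chi> {2} \<Longrightarrow> \<chi> {1,2}" "\<chi> {2} \<Longrightarrow> \<chi> {2,3}"
     "\<chi> {3} \<Longrightarrow> \<chi> {1,3}" "\<chi> {3} \<Longrightarrow> \<chi> {2,3}"
    by (erule m[rotated 2]; auto)+
  note mm = this
  show ?thesis unfolding ss1 ss2 ss3 Tset_def using e f mm
    by (cases "\<chi> {1}"; cases "\<chi> {2}"; cases "\<chi> {3}"; cases "\<chi> {1,2}"; cases "\<chi> {1,3}"; cases "\<chi> {2,3}"; simp)
qed

lemma L1:
  fixes a b c :: real
  assumes "a \<ge> b" "b \<ge> c" "c \<ge> 0" "a + b + c = 1"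
  shows "\<bar>a-1\<bar>+\<bar>b\<bar>+\<bar>c\<bar> \<le> 1/3 \<or> \<bar>a-2/3\<bar>+\<bar>b-1/6\<bar>+\<bar>c-1/6\<bar> \<le> 1/3 \<or>
         \<bar>a-1/2\<bar>+\<bar>b-1/2\<bar>+\<bar>c\<bar> \<le> 1/3 \<or> \<bar>a-1/3\<bar>+\<bar>b-1/3\<bar>+\<bar>c-1/3\<bar> \<le> 1/3"
  using assms by (cases "a \<le> 2/3"; cases "a \<le> 1/2"; cases "b \<le> 1/6"; cases "b \<le> 1/3"; cases "c \<le> 1/6"; simp add: abs_of_nonneg abs_of_nonpos; linarith)
lemma L2:
  fixes a b c :: real
  assumes "a \<ge> b" "b \<ge> c" "c \<ge> 0" "a + b + c = 1"
  and "\<not> ((a = 5/6 \<and> 1/12 \<le> b \<and> b \<le> 1/6) \<or>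
      (2/3 \<le> a \<and> a \<le> 5/6 \<and> a + b = 1) \<or>
      (1/2 \<le> a \<and> a \<le> 2/3 \<and> b = 1/3) \<or>
      (a = 1/2 \<and> 1/4 \<le> b \<and> b \<le> 1/3) \<or>
      (5/12 \<le> a \<and> a \<le> 1/2 \<and> a + b = 5/6))"
  shows "\<bar>a-1\<bar>+\<bar>b\<bar>+\<bar>c\<bar> < 1/3 \<or> \<bar>a-2/3\<bar>+\<bar>b-1/6\<bar>+\<bar>c-1/6\<bar> < 1/3 \<or>
         \<bar>a-1/2\<bar>+\<bar>b-1/2\<bar>+\<bar>c\<bar> < 1/3 \<or> \<bar>a-1/3\<bar>+\<bar>b-1/3\<bar>+\<bar>c-1/3\<bar> < 1/3"
  using assms by (cases "a \<le> 2/3"; cases "a \<le> 1/2"; cases "b \<le> 1/6"; cases "b \<le> 1/3"; cases "c \<le> 1/6"; simp add: abs_of_nonneg abs_of_nonpos; linarith)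
lemma L3:
  fixes a b c :: real
  assumes "a \<ge> b" "b \<ge> c" "c \<ge> 0" "a + b + c = 1"
  and S: "(a = 5/6 \<and> 1/12 \<le> b \<and> b \<le> 1/6) \<or>
      (2/3 \<le> a \<and> a \<le> 5/6 \<and> a + b = 1) \<or>
      (1/2 \<le> a \<and> a \<le> 2/3 \<and> b = 1/3) \<or>
      (a = 1/2 \<and> 1/4 \<le> b \<and> b \<le> 1/3) \<or>
      (5/12 \<le> a \<and> a \<le> 1/2 \<and> a + b = 5/6)"
  and T: "(x,y,z) \<in> Tset"
  shows "\<bar>a-x\<bar>+\<bar>b-y\<bar>+\<bar>c-z\<bar> \<ge> 1/3"
proof -
  have f: "a-x \<le> \<bar>a-x\<bar>" "-(a-x) \<le> \<bar>a-x\<bar>" "b-y \<le> \<bar>b-y\<bar>" "-(b-y) \<le> \<bar>b-y\<bar>"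
     "c-z \<le> \<bar>c-z\<bar>" "-(c-z) \<le> \<bar>c-z\<bar>" by linarith+
  from T have "(x=1\<and>y=0\<and>z=0) \<or> (x=0\<and>y=1\<and>z=0) \<or> (x=0\<and>y=0\<and>z=1) \<or>
     (x=2/3\<and>y=1/6\<and>z=1/6) \<or> (x=1/6\<and>y=2/3\<and>z=1/6) \<or> (x=1/6\<and>y=1/6\<and>z=2/3) \<or>
     (x=1/2\<and>y=1/2\<and>z=0) \<or> (x=1/2\<and>y=0\<and>z=1/2) \<or> (x=0\<and>y=1/2\<and>z=1/2) \<or> (x=1/3\<and>y=1/3\<and>z=1/3)"
    unfolding Tset_def by auto
  then show ?thesis using S f assms(1-4) by (elim disjE conjE; linarith)
qed

theorem mainTheorem3:
  fixes d :: "nat \<Rightarrow> real"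
  assumes "d 1 \<ge> d 2" "d 2 \<ge> d 3" "d 3 \<ge> 0" "d 1 + d 2 + d 3 = 1"
  shows "min_dist_wvg 3 d \<le> 1/3 \<and>
    (min_dist_wvg 3 d = 1/3 \<longleftrightarrow>
      (d 1 = 5/6 \<and> 1/12 \<le> d 2 \<and> d 2 \<le> 1/6) \<or>
      (2/3 \<le> d 1 \<and> d 1 \<le> 5/6 \<and> d 1 + d 2 = 1) \<or>
      (1/2 \<le> d 1 \<and> d 1 \<le> 2/3 \<and> d 2 = 1/3) \<or>
      (d 1 = 1/2 \<and> 1/4 \<le> d 2 \<and> d 2 \<le> 1/3) \<or>
      (5/12 \<le> d 1 \<and> d 1 \<le> 1/2 \<and> d 1 + d 2 = 5/6))"
proof -
  define D where "D = {l1_dist 3 d (shapley_shubik 3 \<chi>) | \<chi>. weighted_voting_game 3 \<chi>}"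
  define g where "g = (\<lambda>(x::real,y::real,z::real). \<bar>d 1 - x\<bar> + \<bar>d 2 - y\<bar> + \<bar>d 3 - z\<bar>)"
  have N: "{1..3::nat} = {1,2,3}" by auto
  have l1: "l1_dist 3 d s = \<bar>d 1 - s 1\<bar> + \<bar>d 2 - s 2\<bar> + \<bar>d 3 - s 3\<bar>" for s
    unfolding l1_dist_def N by simp
  have sub: "D \<subseteq> g ` Tset"
  proof
    fix v assume "v \<in> D"
    then obtain \<chi> where v: "v = l1_dist 3 d (shapley_shubik 3 \<chi>)" and w: "weighted_voting_game 3 \<chi>"
      unfolding D_def by blast
    have "(shapley_shubik 3 \<chi> 1, shapley_shubik 3 \<chi> 2, shapley_shubik 3 \<chi> 3) \<in> Tset"
      using w ss_in_T unfolding weighted_voting_game_def by blast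
    moreover have "v = g (shapley_shubik 3 \<chi> 1, shapley_shubik 3 \<chi> 2, shapley_shubik 3 \<chi> 3)"
      unfolding v l1 g_def by simp
    ultimately show "v \<in> g ` Tset" by blast
  qed
  have finT: "finite Tset" unfolding Tset_def by simp
  have finD: "finite D" using sub finT finite_subset by blast
  have inD: "l1_dist 3 d (shapley_shubik 3 \<chi>) \<in> D" if "weighted_voting_game 3 \<chi>" for \<chi>
    unfolding D_def using that by blast
  have eA: "\<bar>d 1 - 1\<bar> + \<bar>d 2\<bar> + \<bar>d 3\<bar> \<in> D" using inD[OF wvgA] unfolding l1 ssA by simp
  have eB: "\<bar>d 1 - 2/3\<bar> + \<bar>d 2 - 1/6\<bar> + \<bar>d 3 - 1/6\<bar> \<in> D" using inD[OF wvgB] unfolding l1 ssB by simp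
  have eC: "\<bar>d 1 - 1/2\<bar> + \<bar>d 2 - 1/2\<bar> + \<bar>d 3\<bar> \<in> D" using inD[OF wvgC] unfolding l1 ssC by simp
  have eD: "\<bar>d 1 - 1/3\<bar> + \<bar>d 2 - 1/3\<bar> + \<bar>d 3 - 1/3\<bar> \<in> D" using inD[OF wvgD] unfolding l1 ssD by simp
  have ne: "D \<noteq> {}" using eA by blast
  have m: "min_dist_wvg 3 d = Min D" unfolding min_dist_wvg_def D_def by (rule refl)
  have leA: "Min D \<le> \<bar>d 1 - 1\<bar> + \<bar>d 2\<bar> + \<bar>d 3\<bar>" using Min_le[OF finD eA] .
  have leB: "Min D \<le> \<bar>d 1 - 2/3\<bar> + \<bar>d 2 - 1/6\<bar> + \<bar>d 3 - 1/6\<bar>" using Min_le[OF finD eB] .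
  have leC: "Min D \<le> \<bar>d 1 - 1/2\<bar> + \<bar>d 2 - 1/2\<bar> + \<bar>d 3\<bar>" using Min_le[OF finD eC] .
  have leD: "Min D \<le> \<bar>d 1 - 1/3\<bar> + \<bar>d 2 - 1/3\<bar> + \<bar>d 3 - 1/3\<bar>" using Min_le[OF finD eD] .
  have part1: "Min D \<le> 1/3" using L1[OF assms] apply (elim disjE) using leA leB leC leD by linarith+
  obtain x y z where t: "(x,y,z) \<in> Tset" and mt: "Min D = \<bar>d 1 - x\<bar> + \<bar>d 2 - y\<bar> + \<bar>d 3 - z\<bar>"
    using Min_in[OF finD ne] sub unfolding g_def by fastforce
  show ?thesis unfolding m
  proof (intro conjI part1 iffI)
    assume "Min D = 1/3"
    show "(d 1 = 5/6 \<and> 1/12 \<le> d 2 \<and> d 2 \<le> 1/6) \<or>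
      (2/3 \<le> d 1 \<and> d 1 \<le> 5/6 \<and> d 1 + d 2 = 1) \<or>
      (1/2 \<le> d 1 \<and> d 1 \<le> 2/3 \<and> d 2 = 1/3) \<or>
      (d 1 = 1/2 \<and> 1/4 \<le> d 2 \<and> d 2 \<le> 1/3) \<or>
      (5/12 \<le> d 1 \<and> d 1 \<le> 1/2 \<and> d 1 + d 2 = 5/6)"
      (is ?S)
    proof (rule ccontr)
      assume "\<not> ?S"
      from L2[OF assms this] show False
        apply (elim disjE) using leA leB leC leD \<open>Min D = 1/3\<close> by linarith+
    qed
  next
    assume S: "(d 1 = 5/6 \<and> 1/12 \<le> d 2 \<and> d 2 \<le> 1/6) \<or>
      (2/3 \<le> d 1 \<and> d 1 \<le> 5/6 \<and> d 1 + d 2 = 1) \<or>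
      (1/2 \<le> d 1 \<and> d 1 \<le> 2/3 \<and> d 2 = 1/3) \<or>
      (d 1 = 1/2 \<and> 1/4 \<le> d 2 \<and> d 2 \<le> 1/3) \<or>
      (5/12 \<le> d 1 \<and> d 1 \<le> 1/2 \<and> d 1 + d 2 = 5/6)"
    have "Min D \<ge> 1/3" using L3[OF assms S t] mt by linarith
    then show "Min D = 1/3" using part1 by linarith
  qed
qed
end
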